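(* Let $F$ and $H$ be graphs such that $F$ is a subgraph of a blow-up of $H$, and let $r\ge |V(F)|$. Then $\widehat{\mathrm{ex}}_r(n,H,\text{Berge-}F)=o(n^{|V(H)|})$ as $n\to\infty$.
   Context: A blow-up of $H$ is obtained by replacing each vertex of $H$ by an independent set and each edge by a complete bipartite graph between the corresponding sets. A hypergraph $\mathcal{H}$ is a Berge copy of a graph $G$ if $V(G)\subseteq V(\mathcal{H})$ and there is a bijection $f:E(G)\to E(\mathcal{H})$ with $e\subseteq f(e)$ for all $e$; Berge-$F$-free means containing no Berge copy of $F$. The shadow graph of $\mathcal{H}$ is the graph on $V(\mathcal{H})$ where $uv$ is an edge iff some hyperedge contains $u$ and $v$. $\widehat{\mathrm{ex}}_r(n,H,\text{Berge-}F)$ is the maximum number of copies of $H$ in the shadow graph of an $r$-uniform Berge-$F$-free $n$-vertex hypergraph. *)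

theory Defs
  imports Main "HOL-Library.Landau_Symbols"
begin

definition graph :: "'a set \<Rightarrow> 'a set set \<Rightarrow> bool" where
  "graph V E \<longleftrightarrow> finite V \<and> (\<forall>e\<in>E. e \<subseteq> V \<and> card e = 2)"

text \<open>(VB,EB) is a blow-up of (VH,EH): each vertex v of H is replaced by the independent set
  of vertices x with \<pi> x = v, and each edge by the complete bipartite graph between the
  corresponding sets.\<close>
definition is_blowup :: "'a set \<Rightarrow> 'a set set \<Rightarrow> 'b set \<Rightarrow> 'b set set \<Rightarrow> bool" where
  "is_blowup VB EB VH EH \<longleftrightarrow> finite VB \<and> (\<exists>\<pi>. \<pi> ` VB \<subseteq> VH \<and>
     EB = {{x, y} | x y. x \<in> VB \<and> y \<in> VB \<and> {\<pi> x, \<pi> y} \<in> EH})"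

text \<open>F is a subgraph of a blow-up of H (taking the blow-up on F's vertex type, w.l.o.g.).\<close>
definition subgraph_of_blowup :: "'a set \<Rightarrow> 'a set set \<Rightarrow> 'b set \<Rightarrow> 'b set set \<Rightarrow> bool" where
  "subgraph_of_blowup VF EF VH EH \<longleftrightarrow>
     (\<exists>VB EB. is_blowup VB EB VH EH \<and> VF \<subseteq> VB \<and> EF \<subseteq> EB)"

definition uniform_hypergraph :: "nat \<Rightarrow> nat \<Rightarrow> nat set set \<Rightarrow> bool" where
  "uniform_hypergraph r n HH \<longleftrightarrow> (\<forall>h\<in>HH. h \<subseteq> {0..<n} \<and> card h = r)"

definition contains_berge :: "'v set \<Rightarrow> 'v set set \<Rightarrow> 'a set \<Rightarrow> 'a set set \<Rightarrow> bool" where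
  "contains_berge V HH VF EF \<longleftrightarrow>
     (\<exists>\<psi> f. inj_on \<psi> VF \<and> \<psi> ` VF \<subseteq> V \<and> inj_on f EF \<and> f ` EF \<subseteq> HH \<and>
            (\<forall>e\<in>EF. \<psi> ` e \<subseteq> f e))"

definition berge_free :: "'v set \<Rightarrow> 'v set set \<Rightarrow> 'a set \<Rightarrow> 'a set set \<Rightarrow> bool" where
  "berge_free V HH VF EF \<longleftrightarrow> \<not> contains_berge V HH VF EF"

definition shadow :: "'v set set \<Rightarrow> 'v set set" where
  "shadow HH = {{u, v} | u v. u \<noteq> v \<and> (\<exists>h\<in>HH. u \<in> h \<and> v \<in> h)}"

text \<open>The set of copies (not necessarily induced subgraphs isomorphic to (VH,EH)) of H in G.\<close>
definition copies :: "'v set \<Rightarrow> 'v set set \<Rightarrow> 'b set \<Rightarrow> 'b set set \<Rightarrow> ('v set \<times> 'v set set) set" where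
  "copies VG EG VH EH = {(\<psi> ` VH, (\<lambda>e. \<psi> ` e) ` EH) | \<psi>.
      inj_on \<psi> VH \<and> \<psi> ` VH \<subseteq> VG \<and> (\<forall>e\<in>EH. \<psi> ` e \<in> EG)}"

text \<open>Generalized Berge Turan number (0 if there is no admissible hypergraph).\<close>
definition ex_hat :: "nat \<Rightarrow> nat \<Rightarrow> 'b set \<Rightarrow> 'b set set \<Rightarrow> 'a set \<Rightarrow> 'a set set \<Rightarrow> nat" where
  "ex_hat r n VH EH VF EF = Max (insert 0
     {card (copies {0..<n} (shadow HH) VH EH) | HH.
        uniform_hypergraph r n HH \<and> berge_free {0..<n} HH VF EF})"

end

theory Submission imports Defs "HOL-Library.FuncSet" begin

lemma chebyshev_set:
  fixes a b :: "'i \<Rightarrow> real"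
  assumes "finite I" and "\<And>i j. i \<in> I \<Longrightarrow> j \<in> I \<Longrightarrow> 0 \<le> (a i - a j) * (b i - b j)"
  shows "(\<Sum>i\<in>I. a i) * (\<Sum>i\<in>I. b i) \<le> real (card I) * (\<Sum>i\<in>I. a i * b i)"
proof -
  have "0 \<le> (\<Sum>i\<in>I. \<Sum>j\<in>I. (a i - a j) * (b i - b j))"
    by (intro sum_nonneg) (use assms(2) in auto)
  also have "(\<Sum>i\<in>I. \<Sum>j\<in>I. (a i - a j) * (b i - b j))
     = (\<Sum>i\<in>I. \<Sum>j\<in>I. a i * b i) + (\<Sum>i\<in>I. \<Sum>j\<in>I. a j * b j)
       - (\<Sum>i\<in>I. \<Sum>j\<in>I. a i * b j) - (\<Sum>i\<in>I. \<Sum>j\<in>I. a j * b i)"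
  proof -
    have "(a i - a j) * (b i - b j) = a i * b i + a j * b j - a i * b j - a j * b i" for i j
      by (simp add: algebra_simps)
    then show ?thesis by (simp only: sum_subtractf sum.distrib)
  qed
  also have "(\<Sum>i\<in>I. \<Sum>j\<in>I. a i * b i) = real (card I) * (\<Sum>i\<in>I. a i * b i)"
    by (simp add: sum_distrib_left)
  also have "(\<Sum>i\<in>I. \<Sum>j\<in>I. a j * b j) = real (card I) * (\<Sum>i\<in>I. a i * b i)"
    by simp
  also have "(\<Sum>i\<in>I. \<Sum>j\<in>I. a i * b j) = (\<Sum>i\<in>I. a i) * (\<Sum>i\<in>I. b i)"
    by (simp add: sum_product)
  also have "(\<Sum>i\<in>I. \<Sum>j\<in>I. a j * b i) = (\<Sum>i\<in>I. a i) * (\<Sum>i\<in>I. b i)"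
    by (subst sum.swap) (simp add: sum_product)
  finally show ?thesis by simp
qed

lemma sum_power_mean:
  fixes x :: "'i \<Rightarrow> real"
  assumes "finite I" and "\<And>i. i \<in> I \<Longrightarrow> 0 \<le> x i"
  shows "(\<Sum>i\<in>I. x i) ^ Suc t \<le> real (card I) ^ t * (\<Sum>i\<in>I. x i ^ Suc t)"
proof (induction t)
  case 0
  then show ?case by simp
next
  case (Suc t)
  have "(\<Sum>i\<in>I. x i) ^ Suc (Suc t) = (\<Sum>i\<in>I. x i) * (\<Sum>i\<in>I. x i) ^ Suc t" by simp
  also have "\<dots> \<le> (\<Sum>i\<in>I. x i) * (real (card I) ^ t * (\<Sum>i\<in>I. x i ^ Suc t))"
    by (rule mult_left_mono[OF Suc.IH]) (use assms in \<open>auto intro: sum_nonneg\<close>)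
  also have "\<dots> = real (card I) ^ t * ((\<Sum>i\<in>I. x i) * (\<Sum>i\<in>I. x i ^ Suc t))" by simp
  also have "\<dots> \<le> real (card I) ^ t * (real (card I) * (\<Sum>i\<in>I. x i * x i ^ Suc t))"
  proof (rule mult_left_mono[OF chebyshev_set[OF assms(1)]])
    fix i j assume ij: "i \<in> I" "j \<in> I"
    show "0 \<le> (x i - x j) * (x i ^ Suc t - x j ^ Suc t)"
    proof (cases "x i \<le> x j")
      case True
      then have "x i ^ Suc t \<le> x j ^ Suc t" using assms(2) ij by (intro power_mono) auto
      then show ?thesis using True by (intro mult_nonpos_nonpos) auto
    next
      case False
      then have "x j ^ Suc t \<le> x i ^ Suc t" using assms(2) ij by (intro power_mono) auto
      then show ?thesis using False by (intro mult_nonneg_nonneg) auto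
    qed
  qed simp
  also have "\<dots> = real (card I) ^ Suc t * (\<Sum>i\<in>I. x i ^ Suc (Suc t))" by simp
  finally show ?case .
qed

lemma nondistinct_count:
  "real n * real (card {s. length s = T \<and> set s \<subseteq> {..<n} \<and> \<not> distinct s}) \<le> real T ^ 2 * real n ^ T"
proof (induction T)
  case 0
  have "{s. length s = 0 \<and> set s \<subseteq> {..<n} \<and> \<not> distinct s} = {}" by auto
  have "card {s. length s = 0 \<and> set s \<subseteq> {..<n} \<and> \<not> distinct s} = 0"
    by (auto simp: card_eq_0_iff)
  then show ?case by (simp only: of_nat_0 mult_zero_right) simp
next
  case (Suc T)
  define LT where "LT = {s. length s = T \<and> set s \<subseteq> {..<n}}"
  define ND where "ND = {s. length s = T \<and> set s \<subseteq> {..<n} \<and> \<not> distinct s}"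
  have finLT: "finite LT" unfolding LT_def
    using finite_lists_length_eq[of "{..<n}" T] by (simp add: conj_commute)
  have cLT: "card LT = n ^ T" unfolding LT_def
    using card_lists_length_eq[of "{..<n}" T] by (simp add: conj_commute)
  have finND: "finite ND" using finLT unfolding ND_def LT_def by (rule rev_finite_subset) auto
  have sub: "{s. length s = Suc T \<and> set s \<subseteq> {..<n} \<and> \<not> distinct s} \<subseteq>
      (\<lambda>(s, a). a # s) ` (SIGMA s:LT. set s) \<union> (\<lambda>(a, s). a # s) ` ({..<n} \<times> ND)"
  proof
    fix s assume "s \<in> {s. length s = Suc T \<and> set s \<subseteq> {..<n} \<and> \<not> distinct s}"
    then obtain a s' where s: "s = a # s'" "length s' = T" "a < n" "set s' \<subseteq> {..<n}"
        "a \<in> set s' \<or> \<not> distinct s'"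
      by (cases s) auto
    show "s \<in> (\<lambda>(s, a). a # s) ` (SIGMA s:LT. set s) \<union> (\<lambda>(a, s). a # s) ` ({..<n} \<times> ND)"
    proof (cases "a \<in> set s'")
      case True
      then show ?thesis using s unfolding LT_def by (auto intro!: image_eqI[of _ _ "(s', a)"])
    next
      case False
      then show ?thesis using s unfolding ND_def by (auto intro!: image_eqI[of _ _ "(a, s')"])
    qed
  qed
  have c1: "card (SIGMA s:LT. set s) \<le> T * n ^ T"
  proof -
    have "card (SIGMA s:LT. set s) = (\<Sum>s\<in>LT. card (set s))" using finLT by simp
    also have "\<dots> \<le> (\<Sum>s\<in>LT. T)" by (intro sum_mono) (auto simp: LT_def card_length)
    finally show ?thesis using cLT by (simp add: mult.commute)
  qed
  have "card {s. length s = Suc T \<and> set s \<subseteq> {..<n} \<and> \<not> distinct s}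
      \<le> card ((\<lambda>(s, a). a # s) ` (SIGMA s:LT. set s) \<union> (\<lambda>(a, s). a # s) ` ({..<n} \<times> ND))"
    by (rule card_mono[OF _ sub]) (use finLT finND in auto)
  also have "\<dots> \<le> card ((\<lambda>(s, a). a # s) ` (SIGMA s:LT. set s)) + card ((\<lambda>(a, s). a # s) ` ({..<n} \<times> ND))"
    by (rule card_Un_le)
  also have "\<dots> \<le> card (SIGMA s:LT. set s) + card ({..<n} \<times> ND)"
    by (intro add_mono card_image_le) (use finLT finND in auto)
  also have "\<dots> \<le> T * n ^ T + n * card ND" using c1 by (simp add: card_cartesian_product)
  finally have "real (card {s. length s = Suc T \<and> set s \<subseteq> {..<n} \<and> \<not> distinct s})
      \<le> real T * real n ^ T + real n * real (card ND)" by (simp flip: of_nat_mult of_nat_add of_nat_power)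
  then have "real n * real (card {s. length s = Suc T \<and> set s \<subseteq> {..<n} \<and> \<not> distinct s})
      \<le> real n * (real T * real n ^ T + real n * real (card ND))"
    by (intro mult_left_mono) auto
  also have "\<dots> = real T * real n ^ Suc T + real n * (real n * real (card ND))"
    by (simp add: algebra_simps)
  also have "\<dots> \<le> real T * real n ^ Suc T + real n * (real T ^ 2 * real n ^ T)"
    using Suc.IH unfolding ND_def by (intro add_left_mono mult_left_mono) auto
  also have "\<dots> \<le> real (Suc T) ^ 2 * real n ^ Suc T"
    by (simp add: power2_eq_square algebra_simps)
  finally show ?case .
qed

lemma card_filter_sum:
  assumes "finite A" shows "card {x\<in>A. P x} = (\<Sum>x\<in>A. if P x then 1 else (0::nat))"
  using sum.inter_filter[OF assms, of "\<lambda>_. (1::nat)" P] by simp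

lemma erdos_partite:
  fixes T :: nat
  assumes T1: "1 \<le> T"
  shows "\<forall>\<epsilon>>0. \<exists>N. \<forall>n\<ge>N. \<forall>E. E \<subseteq> {xs. length xs = k \<and> set xs \<subseteq> {..<n}} \<longrightarrow>
     \<epsilon> * real n ^ k \<le> real (card E) \<longrightarrow>
     (\<exists>A. (\<forall>i<k. A i \<subseteq> {..<n} \<and> card (A i) = T) \<and>
          (\<forall>xs. length xs = k \<and> (\<forall>i<k. xs ! i \<in> A i) \<longrightarrow> xs \<in> E))"
proof (induction k)
  case 0
  show ?case
  proof (intro allI impI)
    fix \<epsilon> :: real assume "\<epsilon> > 0"
    show "\<exists>N. \<forall>n\<ge>N. \<forall>E. E \<subseteq> {xs. length xs = 0 \<and> set xs \<subseteq> {..<n}} \<longrightarrow>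
     \<epsilon> * real n ^ 0 \<le> real (card E) \<longrightarrow>
     (\<exists>A. (\<forall>i<0. A i \<subseteq> {..<n} \<and> card (A i) = T) \<and>
          (\<forall>xs. length xs = 0 \<and> (\<forall>i<0. xs ! i \<in> A i) \<longrightarrow> xs \<in> E))"
    proof (rule exI[of _ 0], intro allI impI)
      fix n :: nat and E :: "nat list set"
      assume E: "E \<subseteq> {xs. length xs = 0 \<and> set xs \<subseteq> {..<n}}"
        and c: "\<epsilon> * real n ^ 0 \<le> real (card E)"
      have "E \<noteq> {}" using c \<open>\<epsilon> > 0\<close> by (cases "E = {}") auto
      then have "[] \<in> E" using E by auto
      then show "\<exists>A. (\<forall>i<0. A i \<subseteq> {..<n} \<and> card (A i) = T) \<and>
          (\<forall>xs. length xs = 0 \<and> (\<forall>i<0. xs ! i \<in> A i) \<longrightarrow> xs \<in> E)" by auto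
    qed
  qed
next
  case (Suc k)
  obtain t where Tt: "T = Suc t" using T1 by (cases T) auto
  show ?case
  proof (intro allI impI)
    fix \<epsilon> :: real assume "\<epsilon> > 0"
    define \<delta> where "\<delta> = \<epsilon> ^ T / 2"
    have "\<delta> > 0" using \<open>\<epsilon> > 0\<close> by (simp add: \<delta>_def)
    obtain N0 where N0: "\<forall>n\<ge>N0. \<forall>E. E \<subseteq> {xs. length xs = k \<and> set xs \<subseteq> {..<n}} \<longrightarrow>
     \<delta> * real n ^ k \<le> real (card E) \<longrightarrow>
     (\<exists>A. (\<forall>i<k. A i \<subseteq> {..<n} \<and> card (A i) = T) \<and>
          (\<forall>xs. length xs = k \<and> (\<forall>i<k. xs ! i \<in> A i) \<longrightarrow> xs \<in> E))"
      using mp[OF spec[OF Suc.IH, of \<delta>] \<open>\<delta> > 0\<close>] by blast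
    define N where "N = max N0 (nat \<lceil>2 * real T ^ 2 / \<epsilon> ^ T\<rceil> + 1)"
    show "\<exists>N. \<forall>n\<ge>N. \<forall>E. E \<subseteq> {xs. length xs = Suc k \<and> set xs \<subseteq> {..<n}} \<longrightarrow>
     \<epsilon> * real n ^ Suc k \<le> real (card E) \<longrightarrow>
     (\<exists>A. (\<forall>i<Suc k. A i \<subseteq> {..<n} \<and> card (A i) = T) \<and>
          (\<forall>xs. length xs = Suc k \<and> (\<forall>i<Suc k. xs ! i \<in> A i) \<longrightarrow> xs \<in> E))"
    proof (rule exI[of _ N], intro allI impI)
      fix n E assume nN: "n \<ge> N" and Esub: "E \<subseteq> {xs. length xs = Suc k \<and> set xs \<subseteq> {..<n}}"
        and cE: "\<epsilon> * real n ^ Suc k \<le> real (card E)"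
      have nN0: "n \<ge> N0" using nN by (simp add: N_def)
      have nbig: "real n > 2 * real T ^ 2 / \<epsilon> ^ T"
      proof -
        have "real n \<ge> real (nat \<lceil>2 * real T ^ 2 / \<epsilon> ^ T\<rceil> + 1)" using nN by (simp add: N_def)
        moreover have "real (nat \<lceil>2 * real T ^ 2 / \<epsilon> ^ T\<rceil>) \<ge> 2 * real T ^ 2 / \<epsilon> ^ T"
          by linarith
        ultimately show ?thesis by simp
      qed
      have npos: "real n > 0" 
      proof -
        have "2 * real T ^ 2 / \<epsilon> ^ T \<ge> 0" using \<open>\<epsilon> > 0\<close> by simp
        then show ?thesis using nbig by linarith
      qed
      define Lk where "Lk = {ys. length ys = k \<and> set ys \<subseteq> {..<n}}"
      define LT where "LT = {s. length s = T \<and> set s \<subseteq> {..<n}}"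
      define D where "D ys = {a \<in> {..<n}. a # ys \<in> E}" for ys
      define Es where "Es s = {ys \<in> Lk. \<forall>a\<in>set s. a # ys \<in> E}" for s
      have finLk: "finite Lk" unfolding Lk_def
        using finite_lists_length_eq[of "{..<n}" k] by (simp add: conj_commute)
      have cLk: "card Lk = n ^ k" unfolding Lk_def
        using card_lists_length_eq[of "{..<n}" k] by (simp add: conj_commute)
      have finLT: "finite LT" unfolding LT_def
        using finite_lists_length_eq[of "{..<n}" T] by (simp add: conj_commute)
      have cLT: "card LT = n ^ T" unfolding LT_def
        using card_lists_length_eq[of "{..<n}" T] by (simp add: conj_commute)
      have finD: "finite (D ys)" for ys by (simp add: D_def)
      have E_eq: "E = (\<lambda>(ys, a). a # ys) ` (SIGMA ys:Lk. D ys)"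
      proof
        show "E \<subseteq> (\<lambda>(ys, a). a # ys) ` (SIGMA ys:Lk. D ys)"
        proof
          fix xs assume xs: "xs \<in> E"
          then obtain a ys where axs: "xs = a # ys" using Esub by (cases xs) auto
          have "xs \<in> {xs. length xs = Suc k \<and> set xs \<subseteq> {..<n}}" using xs Esub by blast
          then show "xs \<in> (\<lambda>(ys, a). a # ys) ` (SIGMA ys:Lk. D ys)"
            using xs axs by (auto simp: Lk_def D_def intro!: image_eqI[of _ _ "(ys, a)"])
        qed
      qed (auto simp: D_def)
      have inj: "inj_on (\<lambda>(ys, a). a # ys) (SIGMA ys:Lk. D ys)" by (auto simp: inj_on_def)
      have cardE: "card E = (\<Sum>ys\<in>Lk. card (D ys))"
        unfolding E_eq using card_image[OF inj] finLk finD by simp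
      have sumEs: "(\<Sum>s\<in>LT. card (Es s)) = (\<Sum>ys\<in>Lk. card (D ys) ^ T)"
      proof -
        have "(\<Sum>s\<in>LT. card (Es s)) = (\<Sum>s\<in>LT. \<Sum>ys\<in>Lk. if (\<forall>a\<in>set s. a # ys \<in> E) then 1 else (0::nat))"
          by (intro sum.cong refl) (simp add: Es_def card_filter_sum[OF finLk])
        also have "\<dots> = (\<Sum>ys\<in>Lk. \<Sum>s\<in>LT. if (\<forall>a\<in>set s. a # ys \<in> E) then 1 else (0::nat))"
          by (rule sum.swap)
        also have "\<dots> = (\<Sum>ys\<in>Lk. card (D ys) ^ T)"
        proof (intro sum.cong refl)
          fix ys assume "ys \<in> Lk"
          have "(\<Sum>s\<in>LT. if (\<forall>a\<in>set s. a # ys \<in> E) then 1 else (0::nat)) = card {s \<in> LT. \<forall>a\<in>set s. a # ys \<in> E}"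
            by (simp add: card_filter_sum[OF finLT])
          also have "{s \<in> LT. \<forall>a\<in>set s. a # ys \<in> E} = {s. set s \<subseteq> D ys \<and> length s = T}"
            by (auto simp: LT_def D_def)
          also have "card \<dots> = card (D ys) ^ T" by (rule card_lists_length_eq[OF finD])
          finally show "(\<Sum>s\<in>LT. if (\<forall>a\<in>set s. a # ys \<in> E) then 1 else (0::nat)) = card (D ys) ^ T" .
        qed
        finally show ?thesis .
      qed
      have pm: "(\<Sum>ys\<in>Lk. real (card (D ys))) ^ T \<le> real (card Lk) ^ t * (\<Sum>ys\<in>Lk. real (card (D ys)) ^ T)"
        unfolding Tt by (rule sum_power_mean[OF finLk]) auto
      have "(\<epsilon> * real n ^ Suc k) ^ T \<le> (\<Sum>ys\<in>Lk. real (card (D ys))) ^ T"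
        using cE cardE \<open>\<epsilon> > 0\<close> npos by (intro power_mono) auto
      also note pm
      finally have "(\<epsilon> * real n ^ Suc k) ^ T \<le> real n ^ (k * t) * (\<Sum>ys\<in>Lk. real (card (D ys)) ^ T)"
        by (simp add: cLk power_mult)
      moreover have "(\<epsilon> * real n ^ Suc k) ^ T = real n ^ (k * t) * (\<epsilon> ^ T * real n ^ (T + k))"
      proof -
        have e1: "(\<epsilon> * real n ^ Suc k) ^ T = \<epsilon> ^ T * real n ^ (Suc k * T)"
          by (simp only: power_mult_distrib power_mult)
        have e2: "Suc k * T = k * t + (T + k)" by (simp add: Tt)
        show ?thesis unfolding e1 e2 power_add by (simp only: mult_ac)
      qed
      ultimately have "real n ^ (k * t) * (\<epsilon> ^ T * real n ^ (T + k)) \<le> real n ^ (k * t) * (\<Sum>ys\<in>Lk. real (card (D ys)) ^ T)"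
        by simp
      then have S1: "\<epsilon> ^ T * real n ^ (T + k) \<le> (\<Sum>s\<in>LT. real (card (Es s)))"
        using npos sumEs by (simp add: mult_le_cancel_left_pos flip: of_nat_sum of_nat_power)
      define DT where "DT = {s \<in> LT. distinct s}"
      define ND where "ND = {s \<in> LT. \<not> distinct s}"
      have finDT: "finite DT" and finND: "finite ND" using finLT by (auto simp: DT_def ND_def)
      have split: "(\<Sum>s\<in>LT. real (card (Es s))) = (\<Sum>s\<in>DT. real (card (Es s))) + (\<Sum>s\<in>ND. real (card (Es s)))"
      proof -
        have "LT = DT \<union> ND" "DT \<inter> ND = {}" by (auto simp: DT_def ND_def)
        then show ?thesis using finDT finND by (simp add: sum.union_disjoint)
      qed
      have EsLe: "card (Es s) \<le> n ^ k" for s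
        using card_mono[OF finLk, of "Es s"] cLk by (auto simp: Es_def)
      have "(\<Sum>s\<in>ND. real (card (Es s))) \<le> (\<Sum>s\<in>ND. real n ^ k)"
        using EsLe by (intro sum_mono) (simp flip: of_nat_power)
      also have "\<dots> = real (card ND) * real n ^ k" by simp
      finally have S2: "(\<Sum>s\<in>ND. real (card (Es s))) \<le> real (card ND) * real n ^ k" .
      have ndc: "real n * real (card ND) \<le> real T ^ 2 * real n ^ T"
        using nondistinct_count[of n T] unfolding ND_def LT_def by (simp add: conj_commute conj_left_commute)
      have "real T ^ 2 \<le> real n * (\<epsilon> ^ T / 2)"
        using nbig \<open>\<epsilon> > 0\<close> by (simp add: field_simps)
      have "real n * real (card ND) \<le> real n * (\<epsilon> ^ T / 2 * real n ^ T)"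
      proof -
        have "real T ^ 2 * real n ^ T \<le> real n * (\<epsilon> ^ T / 2) * real n ^ T"
          by (rule mult_right_mono[OF \<open>real T ^ 2 \<le> real n * (\<epsilon> ^ T / 2)\<close>]) simp
        with ndc show ?thesis by (simp add: mult.assoc)
      qed
      then have "real (card ND) \<le> \<epsilon> ^ T / 2 * real n ^ T" using npos by simp
      then have "real (card ND) * real n ^ k \<le> (\<epsilon> ^ T / 2 * real n ^ T) * real n ^ k"
        by (rule mult_right_mono) simp
      then have "real (card ND) * real n ^ k \<le> \<epsilon> ^ T / 2 * real n ^ (T + k)"
        by (simp add: power_add mult.assoc)
      with S1 S2 split have S3: "\<delta> * real n ^ (T + k) \<le> (\<Sum>s\<in>DT. real (card (Es s)))"
        by (simp add: \<delta>_def)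
      have cDT: "card DT \<le> n ^ T" using card_mono[OF finLT, of DT] cLT by (auto simp: DT_def)
      have "\<exists>s\<in>DT. \<delta> * real n ^ k \<le> real (card (Es s))"
      proof (rule ccontr)
        assume "\<not> ?thesis"
        then have lt: "\<And>s. s \<in> DT \<Longrightarrow> real (card (Es s)) < \<delta> * real n ^ k" by auto
        show False
        proof (cases "DT = {}")
          case True
          have "\<delta> * real n ^ (T + k) > 0" using \<open>\<delta> > 0\<close> npos by simp
          then show False using S3 True by simp
        next
          case False
          then have "(\<Sum>s\<in>DT. real (card (Es s))) < (\<Sum>s\<in>DT. \<delta> * real n ^ k)"
            using finDT lt by (intro sum_strict_mono) auto
          also have "\<dots> = real (card DT) * (\<delta> * real n ^ k)" by simp
          also have "\<dots> \<le> real n ^ T * (\<delta> * real n ^ k)"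
            using cDT \<open>\<delta> > 0\<close> by (intro mult_right_mono) (auto simp flip: of_nat_power)
          also have "\<dots> = \<delta> * real n ^ (T + k)" by (simp add: power_add)
          finally show False using S3 by simp
        qed
      qed
      then obtain s where sDT: "s \<in> DT" and cEs: "\<delta> * real n ^ k \<le> real (card (Es s))" by blast
      have EsS: "Es s \<subseteq> {xs. length xs = k \<and> set xs \<subseteq> {..<n}}" by (auto simp: Es_def Lk_def)
      obtain A' where A': "\<forall>i<k. A' i \<subseteq> {..<n} \<and> card (A' i) = T"
        "\<forall>xs. length xs = k \<and> (\<forall>i<k. xs ! i \<in> A' i) \<longrightarrow> xs \<in> Es s"
        using N0[rule_format, OF nN0 EsS cEs] by (elim exE conjE)
      have s: "length s = T" "set s \<subseteq> {..<n}" "distinct s" using sDT by (auto simp: DT_def LT_def)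
      show "\<exists>A. (\<forall>i<Suc k. A i \<subseteq> {..<n} \<and> card (A i) = T) \<and>
          (\<forall>xs. length xs = Suc k \<and> (\<forall>i<Suc k. xs ! i \<in> A i) \<longrightarrow> xs \<in> E)"
      proof (rule exI[of _ "\<lambda>i. if i = 0 then set s else A' (i - 1)"], intro conjI allI impI)
        let ?A = "\<lambda>i. if i = 0 then set s else A' (i - 1)"
        fix i assume "i < Suc k"
        then show "?A i \<subseteq> {..<n}" 
          using A'(1) s by auto
      next
        let ?A = "\<lambda>i. if i = 0 then set s else A' (i - 1)"
        fix i assume "i < Suc k"
        then show "card (?A i) = T"
          using A'(1) s by (auto simp: distinct_card)
      next
        let ?A = "\<lambda>i. if i = 0 then set s else A' (i - 1)"
        fix xs assume xs: "length xs = Suc k \<and> (\<forall>i<Suc k. xs ! i \<in> ?A i)"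
        then obtain a ys where axs: "xs = a # ys" by (cases xs) auto
        have "a \<in> set s" using xs axs by force
        have "\<forall>i<k. ys ! i \<in> A' i"
        proof (intro allI impI)
          fix i assume "i < k"
          then have "xs ! Suc i \<in> ?A (Suc i)" using xs by blast
          then show "ys ! i \<in> A' i" using axs by simp
        qed
        moreover have "length ys = k" using xs axs by simp
        ultimately have "ys \<in> Es s" using A'(2) by blast
        then show "xs \<in> E" using \<open>a \<in> set s\<close> axs by (auto simp: Es_def)
      qed
    qed
  qed
qed


lemma card_fix_one:
  fixes Q :: "'a \<Rightarrow> 'c set" and G :: "('a \<Rightarrow> 'c) \<Rightarrow> 'c set"
  assumes fin: "finite V" and w: "w \<in> V"
    and Q: "\<forall>x\<in>V. finite (Q x) \<and> card (Q x) = T"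
    and inv: "\<forall>\<phi>\<in>PiE V Q. G \<phi> = G (restrict \<phi> (V - {w}))"
    and Gb: "\<forall>\<phi>. finite (G \<phi>) \<and> card (G \<phi>) \<le> c"
  shows "card {\<phi>\<in>PiE V Q. \<phi> w \<in> G \<phi>} \<le> c * T ^ (card V - 1)"
proof -
  define S where "S = (SIGMA \<psi>:PiE (V - {w}) Q. G \<psi>)"
  define F where "F = (\<lambda>\<phi>::'a \<Rightarrow> 'c. (restrict \<phi> (V - {w}), \<phi> w))"
  define B where "B = {\<phi>\<in>PiE V Q. \<phi> w \<in> G \<phi>}"
  have inj: "inj_on F B"
  proof (rule inj_onI)
    fix \<phi> \<phi>' assume a: "\<phi> \<in> B" "\<phi>' \<in> B" "F \<phi> = F \<phi>'"
    show "\<phi> = \<phi>'"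
    proof (rule extensionalityI[of _ V])
      show "\<phi> \<in> extensional V" "\<phi>' \<in> extensional V" using a by (auto simp: B_def PiE_iff)
    next
      fix x assume "x \<in> V"
      show "\<phi> x = \<phi>' x"
      proof (cases "x = w")
        case True then show ?thesis using a(3) by (simp add: F_def)
      next
        case False
        then have "restrict \<phi> (V - {w}) x = restrict \<phi>' (V - {w}) x" using a(3) by (simp add: F_def)
        then show ?thesis using False \<open>x \<in> V\<close> by simp
      qed
    qed
  qed
  have sub: "F ` B \<subseteq> S"
  proof
    fix p assume "p \<in> F ` B"
    then obtain \<phi> where \<phi>: "\<phi> \<in> B" "p = F \<phi>" by blast
    have "restrict \<phi> (V - {w}) \<in> PiE (V - {w}) Q" using \<phi>(1) by (auto simp: B_def PiE_iff)
    moreover have "\<phi> w \<in> G (restrict \<phi> (V - {w}))" using \<phi>(1) inv by (auto simp: B_def)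
    ultimately show "p \<in> S" using \<phi>(2) by (simp add: S_def F_def)
  qed
  have finPi: "finite (PiE (V - {w}) Q)" using fin Q by (intro finite_PiE) auto
  have cPi: "card (PiE (V - {w}) Q) = T ^ (card V - 1)"
  proof -
    have "card (PiE (V - {w}) Q) = (\<Prod>x\<in>V - {w}. card (Q x))" using fin by (simp add: card_PiE)
    also have "\<dots> = (\<Prod>x\<in>V - {w}. T)" using Q by (intro prod.cong) auto
    also have "\<dots> = T ^ (card V - 1)" using fin w by simp
    finally show ?thesis .
  qed
  have finS: "finite S" unfolding S_def using finPi Gb by auto
  have "card B = card (F ` B)" using card_image[OF inj] by simp
  also have "\<dots> \<le> card S" by (rule card_mono[OF finS sub])
  also have "card S = (\<Sum>\<psi>\<in>PiE (V - {w}) Q. card (G \<psi>))" unfolding S_def using finPi Gb by simp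
  also have "\<dots> \<le> (\<Sum>\<psi>\<in>PiE (V - {w}) Q. c)" using Gb by (intro sum_mono) auto
  also have "\<dots> = c * T ^ (card V - 1)" using cPi by simp
  finally show ?thesis unfolding B_def .
qed


definition pickh :: "nat set set \<Rightarrow> nat set \<Rightarrow> nat set" where
  "pickh HH S = (if \<exists>h\<in>HH. S \<subseteq> h then SOME h. h \<in> HH \<and> S \<subseteq> h else {})"

lemma pickh: "\<exists>h\<in>HH. S \<subseteq> h \<Longrightarrow> pickh HH S \<in> HH \<and> S \<subseteq> pickh HH S"
  unfolding pickh_def by (simp, rule someI_ex) auto

lemma pickh_card:
  assumes "\<forall>h\<in>HH. h \<subseteq> {0..<n} \<and> card h = r"
  shows "finite (pickh HH S) \<and> card (pickh HH S) \<le> r"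
proof (cases "\<exists>h\<in>HH. S \<subseteq> h")
  case True
  then have "pickh HH S \<in> HH" using pickh by blast
  then show ?thesis using assms by (auto intro: finite_subset)
next
  case False
  then show ?thesis by (simp add: pickh_def)
qed

lemma berge_embed:
  fixes VF :: "'a set" and EF :: "'a set set" and \<pi> :: "'a \<Rightarrow> 'b" and P :: "'b \<Rightarrow> nat set"
    and HH :: "nat set set"
  assumes finVF: "finite VF" and EFsub: "\<forall>e\<in>EF. e \<subseteq> VF \<and> card e = 2"
    and unif: "\<forall>h\<in>HH. h \<subseteq> {0..<n} \<and> card h = r"
    and Pn: "\<forall>x\<in>VF. P (\<pi> x) \<subseteq> {0..<n} \<and> card (P (\<pi> x)) = T"
    and disj: "\<forall>x\<in>VF. \<forall>y\<in>VF. \<pi> x \<noteq> \<pi> y \<longrightarrow> P (\<pi> x) \<inter> P (\<pi> y) = {}"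
    and cover: "\<forall>\<phi>. (\<forall>x\<in>VF. \<phi> x \<in> P (\<pi> x)) \<longrightarrow> (\<forall>e\<in>EF. \<exists>h\<in>HH. \<phi> ` e \<subseteq> h)"
    and Tbig: "card VF ^ 2 + card EF ^ 2 * r < T"
  shows "contains_berge {0..<n} HH VF EF"
proof (cases "VF = {}")
  case True
  have "e \<notin> EF" for e using EFsub True by (cases "e \<in> EF") auto
  then have "EF = {}" by blast
  then show ?thesis using True unfolding contains_berge_def by auto
next
  case False
  define m where "m = card VF"
  have m1: "m \<ge> 1" using False finVF by (simp add: m_def Suc_le_eq card_gt_0_iff)
  define Q where "Q = (\<lambda>x. P (\<pi> x))"
  define \<Omega> where "\<Omega> = PiE VF Q"
  have "EF \<subseteq> Pow VF" using EFsub by auto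
  moreover have "finite (Pow VF)" using finVF by simp
  ultimately have finEF: "finite EF" by (rule finite_subset)
  have Qf: "\<forall>x\<in>VF. finite (Q x) \<and> card (Q x) = T" using Pn unfolding Q_def by (auto intro: finite_subset)
  have cO: "card \<Omega> = T ^ m"
  proof -
    have "card \<Omega> = (\<Prod>x\<in>VF. card (Q x))" using finVF by (simp add: \<Omega>_def card_PiE)
    also have "\<dots> = (\<Prod>x\<in>VF. T)" using Qf by (intro prod.cong) auto
    finally show ?thesis by (simp add: m_def)
  qed
  have finO: "finite \<Omega>" using finVF Qf unfolding \<Omega>_def by (intro finite_PiE) auto
  have covO: "\<forall>e\<in>EF. \<exists>h\<in>HH. \<phi> ` e \<subseteq> h" if "\<phi> \<in> \<Omega>" for \<phi>
    using cover that by (auto simp: \<Omega>_def Q_def PiE_iff)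
  define I1 where "I1 = {(x, y). x \<in> VF \<and> y \<in> VF \<and> x \<noteq> y}"
  define I2 where "I2 = {(e1, e2). e1 \<in> EF \<and> e2 \<in> EF \<and> e1 \<noteq> e2}"
  define B1 where "B1 = (\<lambda>(x, y). {\<phi>\<in>\<Omega>. \<phi> x = \<phi> y})"
  define B2 where "B2 = (\<lambda>(e1, e2). {\<phi>\<in>\<Omega>. pickh HH (\<phi> ` e1) = pickh HH (\<phi> ` e2)})"
  have finI1: "finite I1" and cI1: "card I1 \<le> m ^ 2"
  proof -
    have "I1 \<subseteq> VF \<times> VF" by (auto simp: I1_def)
    moreover have "card (VF \<times> VF) = m ^ 2" by (simp add: card_cartesian_product m_def power2_eq_square)
    moreover have fp: "finite (VF \<times> VF)" using finVF by simp
    ultimately show "finite I1" "card I1 \<le> m ^ 2"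
      using finite_subset card_mono[OF fp] by metis+
  qed
  have finI2: "finite I2" and cI2: "card I2 \<le> card EF ^ 2"
  proof -
    have "I2 \<subseteq> EF \<times> EF" by (auto simp: I2_def)
    moreover have "card (EF \<times> EF) = card EF ^ 2" by (simp add: card_cartesian_product power2_eq_square)
    moreover have fp: "finite (EF \<times> EF)" using finEF by simp
    ultimately show "finite I2" "card I2 \<le> card EF ^ 2"
      using finite_subset card_mono[OF fp] by metis+
  qed
  have b1: "card (B1 p) \<le> T ^ (m - 1)" if pI: "p \<in> I1" for p
  proof -
    obtain x y where p: "p = (x, y)" "x \<in> VF" "y \<in> VF" "x \<noteq> y" using pI by (auto simp: I1_def)
    have "card {\<phi>\<in>PiE VF Q. \<phi> y \<in> (\<lambda>\<phi>. {\<phi> x}) \<phi>} \<le> 1 * T ^ (card VF - 1)"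
      by (rule card_fix_one[OF finVF p(3) Qf]) (use p in auto)
    moreover have "B1 p = {\<phi>\<in>PiE VF Q. \<phi> y \<in> (\<lambda>\<phi>. {\<phi> x}) \<phi>}" using p by (auto simp: B1_def \<Omega>_def)
    ultimately show ?thesis by (simp add: m_def)
  qed
  have b2: "card (B2 p) \<le> r * T ^ (m - 1)" if pI: "p \<in> I2" for p
  proof -
    obtain e1 e2 where p: "p = (e1, e2)" "e1 \<in> EF" "e2 \<in> EF" "e1 \<noteq> e2" using pI by (auto simp: I2_def)
    have "\<exists>w\<in>e2. w \<notin> e1"
    proof (rule ccontr)
      assume "\<not> ?thesis"
      then have "e2 \<subseteq> e1" by auto
      moreover have "card e2 = card e1" "finite e1" using EFsub p
        by (auto intro: finite_subset[OF _ finVF])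
      ultimately have "e2 = e1" by (metis card_subset_eq)
      then show False using p by simp
    qed
    then obtain w where w: "w \<in> e2" "w \<notin> e1" by blast
    have wV: "w \<in> VF" using w p EFsub by auto
    have e1V: "e1 \<subseteq> VF - {w}" using w p EFsub by auto
    have "card {\<phi>\<in>PiE VF Q. \<phi> w \<in> (\<lambda>\<phi>. pickh HH (\<phi> ` e1)) \<phi>} \<le> r * T ^ (card VF - 1)"
    proof (rule card_fix_one[OF finVF wV Qf])
      show "\<forall>\<phi>\<in>PiE VF Q. pickh HH (\<phi> ` e1) = pickh HH (restrict \<phi> (VF - {w}) ` e1)"
      proof
        fix \<phi> :: "'a \<Rightarrow> nat"
        have "\<phi> ` e1 = restrict \<phi> (VF - {w}) ` e1" by (intro image_cong refl) (use e1V in auto)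
        then show "pickh HH (\<phi> ` e1) = pickh HH (restrict \<phi> (VF - {w}) ` e1)" by simp
      qed
      show "\<forall>\<phi>. finite (pickh HH (\<phi> ` e1)) \<and> card (pickh HH (\<phi> ` e1)) \<le> r"
        using pickh_card[OF unif] by blast
    qed
    moreover have "B2 p \<subseteq> {\<phi>\<in>PiE VF Q. \<phi> w \<in> (\<lambda>\<phi>. pickh HH (\<phi> ` e1)) \<phi>}"
    proof
      fix \<phi> assume "\<phi> \<in> B2 p"
      then have \<phi>: "\<phi> \<in> \<Omega>" "pickh HH (\<phi> ` e1) = pickh HH (\<phi> ` e2)" using p by (auto simp: B2_def)
      have "\<exists>h\<in>HH. \<phi> ` e2 \<subseteq> h" using covO[OF \<phi>(1)] p(3) by blast
      then have "\<phi> ` e2 \<subseteq> pickh HH (\<phi> ` e2)" by (rule conjunct2[OF pickh])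
      then have "\<phi> w \<in> pickh HH (\<phi> ` e1)" using \<phi>(2) w by auto
      then show "\<phi> \<in> {\<phi>\<in>PiE VF Q. \<phi> w \<in> (\<lambda>\<phi>. pickh HH (\<phi> ` e1)) \<phi>}" using \<phi>(1) by (simp add: \<Omega>_def)
    qed
    moreover have "finite {\<phi>\<in>PiE VF Q. \<phi> w \<in> (\<lambda>\<phi>. pickh HH (\<phi> ` e1)) \<phi>}"
      using finO by (simp add: \<Omega>_def)
    ultimately have "card (B2 p) \<le> card {\<phi>\<in>PiE VF Q. \<phi> w \<in> (\<lambda>\<phi>. pickh HH (\<phi> ` e1)) \<phi>}"
      using card_mono by blast
    with \<open>card {\<phi>\<in>PiE VF Q. \<phi> w \<in> (\<lambda>\<phi>. pickh HH (\<phi> ` e1)) \<phi>} \<le> r * T ^ (card VF - 1)\<close>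
    show ?thesis by (simp add: m_def)
  qed
  define Bad where "Bad = (\<Union>p\<in>I1. B1 p) \<union> (\<Union>p\<in>I2. B2 p)"
  have u1: "card (\<Union>p\<in>I1. B1 p) \<le> m ^ 2 * T ^ (m - 1)"
  proof -
    have "card (\<Union>p\<in>I1. B1 p) \<le> (\<Sum>p\<in>I1. card (B1 p))" by (rule card_UN_le[OF finI1])
    also have "\<dots> \<le> (\<Sum>p\<in>I1. T ^ (m - 1))" using b1 by (intro sum_mono) auto
    also have "\<dots> = card I1 * T ^ (m - 1)" by simp
    also have "\<dots> \<le> m ^ 2 * T ^ (m - 1)" using cI1 by (rule mult_right_mono) simp
    finally show ?thesis .
  qed
  have u2: "card (\<Union>p\<in>I2. B2 p) \<le> card EF ^ 2 * r * T ^ (m - 1)"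
  proof -
    have "card (\<Union>p\<in>I2. B2 p) \<le> (\<Sum>p\<in>I2. card (B2 p))" by (rule card_UN_le[OF finI2])
    also have "\<dots> \<le> (\<Sum>p\<in>I2. r * T ^ (m - 1))" using b2 by (intro sum_mono) auto
    also have "\<dots> = card I2 * (r * T ^ (m - 1))" by simp
    also have "\<dots> \<le> card EF ^ 2 * (r * T ^ (m - 1))" using cI2 by (rule mult_right_mono) simp
    finally show ?thesis by (simp add: mult.assoc)
  qed
  have "card Bad \<le> card (\<Union>p\<in>I1. B1 p) + card (\<Union>p\<in>I2. B2 p)" unfolding Bad_def by (rule card_Un_le)
  also have "\<dots> \<le> m ^ 2 * T ^ (m - 1) + card EF ^ 2 * r * T ^ (m - 1)" using u1 u2 by (rule add_mono)
  also have "\<dots> = (m ^ 2 + card EF ^ 2 * r) * T ^ (m - 1)"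
    by (simp add: algebra_simps)
  also have "\<dots> < T * T ^ (m - 1)"
    using Tbig by (intro mult_strict_right_mono) (auto simp: m_def)
  also have "T * T ^ (m - 1) = card \<Omega>" using m1 cO by (simp flip: power_Suc)
  finally have "card Bad < card \<Omega>" .
  have BadO: "Bad \<subseteq> \<Omega>" unfolding Bad_def B1_def B2_def by auto
  have "\<not> \<Omega> \<subseteq> Bad"
  proof
    assume "\<Omega> \<subseteq> Bad"
    then have "card \<Omega> \<le> card Bad" by (rule card_mono[OF finite_subset[OF BadO finO]])
    with \<open>card Bad < card \<Omega>\<close> show False by simp
  qed
  then obtain \<phi> where \<phi>: "\<phi> \<in> \<Omega>" "\<phi> \<notin> Bad" by blast
  show ?thesis unfolding contains_berge_def
  proof (intro exI conjI)
    show "inj_on \<phi> VF"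
    proof (rule inj_onI, rule ccontr)
      fix x y assume "x \<in> VF" "y \<in> VF" "\<phi> x = \<phi> y" "x \<noteq> y"
      then have "\<phi> \<in> B1 (x, y)" "(x, y) \<in> I1" using \<phi> by (auto simp: B1_def I1_def)
      then show False using \<phi> by (auto simp: Bad_def)
    qed
    show "\<phi> ` VF \<subseteq> {0..<n}" using \<phi>(1) Pn by (auto simp: \<Omega>_def Q_def PiE_iff)
    show "inj_on (\<lambda>e. pickh HH (\<phi> ` e)) EF"
    proof (rule inj_onI, rule ccontr)
      fix x y assume "x \<in> EF" "y \<in> EF" "pickh HH (\<phi> ` x) = pickh HH (\<phi> ` y)" "x \<noteq> y"
      then have "\<phi> \<in> B2 (x, y)" "(x, y) \<in> I2" using \<phi> by (auto simp: B2_def I2_def)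
      then show False using \<phi> by (auto simp: Bad_def)
    qed
    show "(\<lambda>e. pickh HH (\<phi> ` e)) ` EF \<subseteq> HH"
    proof
      fix h assume "h \<in> (\<lambda>e. pickh HH (\<phi> ` e)) ` EF"
      then obtain e where e: "e \<in> EF" "h = pickh HH (\<phi> ` e)" by blast
      have "\<exists>h\<in>HH. \<phi> ` e \<subseteq> h" using covO[OF \<phi>(1)] e(1) by blast
      then show "h \<in> HH" using e(2) by (simp add: pickh)
    qed
    show "\<forall>e\<in>EF. \<phi> ` e \<subseteq> pickh HH (\<phi> ` e)"
    proof
      fix e assume e: "e \<in> EF"
      have "\<exists>h\<in>HH. \<phi> ` e \<subseteq> h" using covO[OF \<phi>(1)] e by blast
      then show "\<phi> ` e \<subseteq> pickh HH (\<phi> ` e)" by (rule conjunct2[OF pickh])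
    qed
  qed
qed


lemma pick_list:
  assumes "\<forall>l<k. A l \<noteq> {}" "i < k" "j < k" "a \<in> A i" "b \<in> A j" "i = j \<longrightarrow> a = b"
  shows "\<exists>xs. length xs = k \<and> (\<forall>l<k. xs ! l \<in> A l) \<and> xs ! i = a \<and> xs ! j = b"
proof (intro exI conjI allI impI)
  let ?xs = "map (\<lambda>l. if l = i then a else if l = j then b else SOME z. z \<in> A l) [0..<k]"
  show "length ?xs = k" by simp
  show "?xs ! i = a" using assms by simp
  show "?xs ! j = b" using assms by auto
  fix l assume "l < k"
  then show "?xs ! l \<in> A l" using assms by (auto simp: some_in_eq)
qed

theorem corollary8:
  fixes VF :: "'a set" and EF :: "'a set set" and VH :: "'b set" and EH :: "'b set set"
    and r :: nat
  assumes "graph VF EF" and "graph VH EH"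
    and "subgraph_of_blowup VF EF VH EH"
    and "r \<ge> card VF"
  shows "(\<lambda>n. real (ex_hat r n VH EH VF EF)) \<in> o(\<lambda>n. real n ^ card VH)"
proof -
  have finVF: "finite VF" and EFsub: "\<forall>e\<in>EF. e \<subseteq> VF \<and> card e = 2"
    using assms(1) by (auto simp: graph_def)
  have finVH: "finite VH" and EHsub: "\<forall>e\<in>EH. e \<subseteq> VH \<and> card e = 2"
    using assms(2) by (auto simp: graph_def)
  define k where "k = card VH"
  show ?thesis
  proof (cases "EF = {}")
    case True
    have ev: "eventually (\<lambda>n. ex_hat r n VH EH VF EF = 0) at_top"
      using eventually_ge_at_top[of "card VF"]
    proof (rule eventually_mono)
      fix n assume "card VF \<le> n"
      then obtain \<psi> where \<psi>: "\<psi> ` VF \<subseteq> {0..<n}" "inj_on \<psi> VF"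
        using card_le_inj[OF finVF, of "{0..<n}"] by auto
      have "contains_berge {0..<n} HH VF EF" for HH
        unfolding contains_berge_def using True \<psi> by auto
      then have Se: "{card (copies {0..<n} (shadow HH) VH EH) | HH.
          uniform_hypergraph r n HH \<and> berge_free {0..<n} HH VF EF} = {}"
        by (auto simp: berge_free_def)
      show "ex_hat r n VH EH VF EF = 0" unfolding ex_hat_def Se by simp
    qed
    show ?thesis
    proof (rule landau_o.smallI)
      fix c :: real assume "c > 0"
      show "eventually (\<lambda>n. norm (real (ex_hat r n VH EH VF EF)) \<le> c * norm (real n ^ card VH)) at_top"
        using ev by (rule eventually_mono) (use \<open>c > 0\<close> in simp)
    qed
  next
    case False
    obtain VB EB where bl: "is_blowup VB EB VH EH" "VF \<subseteq> VB" "EF \<subseteq> EB"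
      using assms(3) by (auto simp: subgraph_of_blowup_def)
    obtain \<pi> where \<pi>: "\<pi> ` VB \<subseteq> VH" "EB = {{x, y} | x y. x \<in> VB \<and> y \<in> VB \<and> {\<pi> x, \<pi> y} \<in> EH}"
      using bl(1) by (auto simp: is_blowup_def)
    define T where "T = card VF ^ 2 + card EF ^ 2 * r + 1"
    have T1: "1 \<le> T" by (simp add: T_def)
    obtain g where g: "bij_betw g {0..<k} VH" using ex_bij_betw_nat_finite[OF finVH] k_def by auto
    define idx where "idx = inv_into {0..<k} g"
    have idx: "bij_betw idx VH {0..<k}" unfolding idx_def by (rule bij_betw_inv_into[OF g])
    have gidx: "g (idx v) = v" if "v \<in> VH" for v
      using that g unfolding idx_def by (simp add: bij_betw_inv_into_right)
    have idxk: "idx v < k" if "v \<in> VH" for v using idx that by (auto simp: bij_betw_def)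
    have idxinj: "idx u \<noteq> idx v" if "u \<in> VH" "v \<in> VH" "u \<noteq> v" for u v
      using idx that by (auto simp: bij_betw_def inj_on_def)
    have \<pi>VF: "\<pi> x \<in> VH" if "x \<in> VF" for x using that bl(2) \<pi>(1) by auto
    show ?thesis
    proof (rule landau_o.smallI)
      fix c :: real assume "c > 0"
      obtain N where N: "\<forall>n\<ge>N. \<forall>E. E \<subseteq> {xs. length xs = k \<and> set xs \<subseteq> {..<n}} \<longrightarrow>
        c * real n ^ k \<le> real (card E) \<longrightarrow>
        (\<exists>A. (\<forall>i<k. A i \<subseteq> {..<n} \<and> card (A i) = T) \<and>
          (\<forall>xs. length xs = k \<and> (\<forall>i<k. xs ! i \<in> A i) \<longrightarrow> xs \<in> E))"
        using mp[OF spec[OF erdos_partite[OF T1, of k], of c] \<open>c > 0\<close>] by blast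
      show "eventually (\<lambda>n. norm (real (ex_hat r n VH EH VF EF)) \<le> c * norm (real n ^ card VH)) at_top"
        using eventually_ge_at_top[of N]
      proof (rule eventually_mono)
        fix n assume nN: "N \<le> n"
        have key: "real (card (copies {0..<n} (shadow HH) VH EH)) \<le> c * real n ^ k \<and>
                   card (copies {0..<n} (shadow HH) VH EH) \<le> n ^ k"
          if HH: "uniform_hypergraph r n HH" "berge_free {0..<n} HH VF EF" for HH
        proof -
          define E where "E = {xs. length xs = k \<and> set xs \<subseteq> {..<n} \<and> distinct xs \<and>
              (\<forall>e\<in>EH. (\<lambda>v. xs ! idx v) ` e \<in> shadow HH)}"
          define Fm where "Fm xs = ((\<lambda>v. xs ! idx v) ` VH, (\<lambda>e. (\<lambda>v. xs ! idx v) ` e) ` EH)" for xs :: "nat list"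
          have Esub: "E \<subseteq> {xs. length xs = k \<and> set xs \<subseteq> {..<n}}" by (auto simp: E_def)
          have finL: "finite {xs. length xs = k \<and> set xs \<subseteq> {..<n}}"
            using finite_lists_length_eq[of "{..<n}" k] by (simp add: conj_commute)
          have cL: "card {xs. length xs = k \<and> set xs \<subseteq> {..<n}} = n ^ k"
            using card_lists_length_eq[of "{..<n}" k] by (simp add: conj_commute)
          have cE: "card E \<le> n ^ k" using card_mono[OF finL Esub] cL by simp
          have cop: "copies {0..<n} (shadow HH) VH EH \<subseteq> Fm ` E"
          proof
            fix p assume "p \<in> copies {0..<n} (shadow HH) VH EH"
            then obtain \<psi> where \<psi>: "p = (\<psi> ` VH, (\<lambda>e. \<psi> ` e) ` EH)" "inj_on \<psi> VH"
                "\<psi> ` VH \<subseteq> {0..<n}" "\<forall>e\<in>EH. \<psi> ` e \<in> shadow HH"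
              unfolding copies_def by blast
            define xs where "xs = map (\<lambda>i. \<psi> (g i)) [0..<k]"
            have xsv: "xs ! idx v = \<psi> v" if "v \<in> VH" for v
              using that idxk gidx by (simp add: xs_def)
            have gin: "g i \<in> VH" if "i < k" for i using g that by (auto simp: bij_betw_def)
            have "inj_on (\<lambda>i. \<psi> (g i)) {0..<k}"
            proof (rule inj_onI)
              fix i j assume "i \<in> {0..<k}" "j \<in> {0..<k}" "\<psi> (g i) = \<psi> (g j)"
              then have "g i = g j" using \<psi>(2) gin by (auto simp: inj_on_def)
              then show "i = j" using g \<open>i \<in> {0..<k}\<close> \<open>j \<in> {0..<k}\<close> by (auto simp: bij_betw_def inj_on_def)
            qed
            then have "distinct xs" by (simp add: xs_def distinct_map)
            moreover have "set xs \<subseteq> {..<n}"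
            proof
              fix z assume "z \<in> set xs"
              then obtain i where "i < k" "z = \<psi> (g i)" by (auto simp: xs_def)
              then have "z \<in> \<psi> ` VH" using gin by auto
              then show "z \<in> {..<n}" using \<psi>(3) by auto
            qed
            moreover have img: "(\<lambda>v. xs ! idx v) ` e = \<psi> ` e" if "e \<subseteq> VH" for e
              using that xsv by (intro image_cong) auto
            moreover have "\<forall>e\<in>EH. (\<lambda>v. xs ! idx v) ` e \<in> shadow HH" using \<psi>(4) img EHsub by auto
            ultimately have "xs \<in> E" by (simp add: E_def xs_def)
            moreover have "Fm xs = p"
            proof -
              have "(\<lambda>e. (\<lambda>v. xs ! idx v) ` e) ` EH = (\<lambda>e. \<psi> ` e) ` EH"
              proof (rule image_cong[OF refl])
                fix e assume "e \<in> EH"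
                then show "(\<lambda>v. xs ! idx v) ` e = \<psi> ` e" using img EHsub by blast
              qed
              then show ?thesis using img[of VH] \<psi>(1) by (simp add: Fm_def)
            qed
            ultimately show "p \<in> Fm ` E" by blast
          qed
          have finE: "finite E" using finite_subset[OF Esub finL] .
          have cc: "card (copies {0..<n} (shadow HH) VH EH) \<le> card E"
            using card_mono[OF finite_imageI[OF finE] cop] card_image_le[OF finE, of Fm] by linarith
          have "real (card E) \<le> c * real n ^ k"
          proof (rule ccontr)
            assume "\<not> ?thesis"
            then have cEn: "c * real n ^ k \<le> real (card E)" by simp
            obtain A where A: "\<forall>i<k. A i \<subseteq> {..<n} \<and> card (A i) = T"
                "\<forall>xs. length xs = k \<and> (\<forall>i<k. xs ! i \<in> A i) \<longrightarrow> xs \<in> E"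
              using N[rule_format, OF nN Esub cEn] by (elim exE conjE)
            have Ane: "\<forall>l<k. A l \<noteq> {}"
            proof (intro allI impI)
              fix l assume "l < k"
              then have "card (A l) = T" using A(1) by blast
              then show "A l \<noteq> {}" using T1 by auto
            qed
            have "contains_berge {0..<n} HH VF EF"
            proof (rule berge_embed[where \<pi> = \<pi> and P = "\<lambda>v. A (idx v)" and T = T and r = r])
              show "finite VF" by (rule finVF)
              show "\<forall>e\<in>EF. e \<subseteq> VF \<and> card e = 2" by (rule EFsub)
              show "\<forall>h\<in>HH. h \<subseteq> {0..<n} \<and> card h = r" using HH(1) by (simp add: uniform_hypergraph_def)
              show "\<forall>x\<in>VF. A (idx (\<pi> x)) \<subseteq> {0..<n} \<and> card (A (idx (\<pi> x))) = T"
                using A(1) idxk \<pi>VF by (auto simp: lessThan_atLeast0)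
              show "card VF ^ 2 + card EF ^ 2 * r < T" by (simp add: T_def)
              show "\<forall>x\<in>VF. \<forall>y\<in>VF. \<pi> x \<noteq> \<pi> y \<longrightarrow> A (idx (\<pi> x)) \<inter> A (idx (\<pi> y)) = {}"
              proof (intro ballI impI)
                fix x y assume xy: "x \<in> VF" "y \<in> VF" "\<pi> x \<noteq> \<pi> y"
                show "A (idx (\<pi> x)) \<inter> A (idx (\<pi> y)) = {}"
                proof (rule ccontr)
                  assume "A (idx (\<pi> x)) \<inter> A (idx (\<pi> y)) \<noteq> {}"
                  then obtain a where a: "a \<in> A (idx (\<pi> x))" "a \<in> A (idx (\<pi> y))" by blast
                  have ij: "idx (\<pi> x) \<noteq> idx (\<pi> y)" using idxinj \<pi>VF xy by blast
                  obtain xs where xs: "length xs = k" "\<forall>l<k. xs ! l \<in> A l"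
                      "xs ! idx (\<pi> x) = a" "xs ! idx (\<pi> y) = a"
                    using pick_list[OF Ane idxk[OF \<pi>VF[OF xy(1)]] idxk[OF \<pi>VF[OF xy(2)]] a] by blast
                  then have "xs \<in> E" using A(2) by blast
                  then have "distinct xs" by (simp add: E_def)
                  moreover have "idx (\<pi> x) < length xs" "idx (\<pi> y) < length xs"
                    using xs(1) idxk \<pi>VF xy by auto
                  ultimately have "(xs ! idx (\<pi> x) = xs ! idx (\<pi> y)) = (idx (\<pi> x) = idx (\<pi> y))"
                    by (rule nth_eq_iff_index_eq)
                  then show False using xs(3,4) ij by simp
                qed
              qed
              show "\<forall>\<phi>. (\<forall>x\<in>VF. \<phi> x \<in> A (idx (\<pi> x))) \<longrightarrow> (\<forall>e\<in>EF. \<exists>h\<in>HH. \<phi> ` e \<subseteq> h)"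
              proof (intro allI impI ballI)
                fix \<phi> :: "'a \<Rightarrow> nat" and e assume \<phi>: "\<forall>x\<in>VF. \<phi> x \<in> A (idx (\<pi> x))" and e: "e \<in> EF"
                obtain x y where xy: "e = {x, y}" "x \<in> VB" "y \<in> VB" "{\<pi> x, \<pi> y} \<in> EH"
                  using e bl(3) \<pi>(2) by blast
                have xyF: "x \<in> VF" "y \<in> VF" using EFsub e xy(1) by auto
                have "card {\<pi> x, \<pi> y} = 2" using EHsub xy(4) by blast
                then have pxy: "\<pi> x \<noteq> \<pi> y" by (cases "\<pi> x = \<pi> y") auto
                have ij: "idx (\<pi> x) \<noteq> idx (\<pi> y)" using idxinj \<pi>VF xyF pxy by blast
                obtain xs where xs: "length xs = k" "\<forall>l<k. xs ! l \<in> A l"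
                    "xs ! idx (\<pi> x) = \<phi> x" "xs ! idx (\<pi> y) = \<phi> y"
                  using pick_list[OF Ane idxk[OF \<pi>VF[OF xyF(1)]] idxk[OF \<pi>VF[OF xyF(2)]]
                      \<phi>[rule_format, OF xyF(1)] \<phi>[rule_format, OF xyF(2)]] ij by blast
                then have "xs \<in> E" using A(2) by blast
                then have "(\<lambda>v. xs ! idx v) ` {\<pi> x, \<pi> y} \<in> shadow HH" using xy(4) unfolding E_def by blast
                then have "{\<phi> x, \<phi> y} \<in> shadow HH" using xs by simp
                then obtain u v h where uv: "{\<phi> x, \<phi> y} = {u, v}" "h \<in> HH" "u \<in> h" "v \<in> h"
                  unfolding shadow_def by blast
                have "\<phi> ` e \<subseteq> h" using uv xy(1) by (auto simp: doubleton_eq_iff)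
                then show "\<exists>h\<in>HH. \<phi> ` e \<subseteq> h" using uv(2) by blast
              qed
            qed
            then show False using HH(2) by (simp add: berge_free_def)
          qed
          then show ?thesis using cc cE by (smt (verit) of_nat_le_iff)
        qed
        define S where "S = {card (copies {0..<n} (shadow HH) VH EH) | HH.
            uniform_hypergraph r n HH \<and> berge_free {0..<n} HH VF EF}"
        have Sb: "S \<subseteq> {..n ^ k}" using key by (auto simp: S_def)
        have finS: "finite (insert 0 S)" using finite_subset[OF Sb] by simp
        have "Max (insert 0 S) \<in> insert 0 S" using finS by (intro Max_in) auto
        moreover have "\<forall>x\<in>insert 0 S. real x \<le> c * real n ^ k"
          using key \<open>c > 0\<close> by (auto simp: S_def)
        ultimately have "real (Max (insert 0 S)) \<le> c * real n ^ k" by blast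
        then show "norm (real (ex_hat r n VH EH VF EF)) \<le> c * norm (real n ^ card VH)"
          by (simp add: ex_hat_def S_def k_def)
      qed
    qed
  qed
qed

end
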